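(* Let $p$ be an odd prime, $k$ algebraically closed of characteristic $p$, $d=p^2-1$, and let $X$ be the Artin–Schreier curve $y^p-y=-x^{d}-x^{d/2}$ over $k$. Let $k_0$ be an integer with $0\le k_0<\frac{p-1}{2}$ and $l$ an integer with $0\le l\le \frac{d(p/2-1-k_0)-p}{p}$. Then there exists $y^mx^ndx\in\mathcal B_X$ with $m<\frac{p-1}{2}$ such that the largest term of $\mathcal C_X(y^mx^ndx)$ is $y^{k_0}x^ldx$.
   Context: $\mathcal C_X$ is the Cartier operator on $H^0(X,\Omega^1_X)$: the $p^{-1}$-semilinear map with $\mathcal C_X(f^p\alpha+\beta)=f\,\mathcal C_X(\alpha)+\mathcal C_X(\beta)$, $\mathcal C_X(x^{p-1}dx)=dx$, $\mathcal C_X(x^ndx)=0$ for $n\not\equiv-1\pmod p$. For an Artin–Schreier curve $y^p-y=f$ with $f\in k[x]$ of degree $D$ prime to $p$, the set $$\mathcal B_X=\left\{y^ix^jdx:\ 0\le i\le p-2,\ 0\le j\le \left\lceil\tfrac{(p-i-1)D}{p}\right\rceil-2\right\}$$ is a $k$-basis of $H^0(X,\Omega^1_X)$. Order $\mathcal B_X$ lexicographically with $y>x$: $y^ix^jdx>y^ax^bdx$ iff $i>a$, or $i=a$ and $j>b$. The "largest term" of a nonzero differential $\omega\in H^0(X,\Omega^1_X)$ is the largest element of $\mathcal B_X$ appearing with nonzero coefficient when $\omega$ is written in the basis $\mathcal B_X$. *)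

theory Defs
  imports Complex_Main "HOL-Computational_Algebra.Polynomial"
begin

(* The coordinate ring R = k[x,y]/(y^p - y - f) is modelled by k[x][y], i.e. the type
   'k poly poly (outer variable y, inner variable x), modulo the monic polynomial
   AS_poly f p = y^p - y - f.  A differential g dx with g in R is represented by g. *)

definition xR :: "'k::comm_ring_1 poly poly" where
  "xR = [:[:0, 1:]:]"

definition yR :: "'k::comm_ring_1 poly poly" where
  "yR = [:0, 1:]"

definition AS_poly :: "'k::comm_ring_1 poly \<Rightarrow> nat \<Rightarrow> 'k poly poly" where
  "AS_poly f p = monom 1 p - monom 1 1 - [:f:]"

definition f_d :: "nat \<Rightarrow> 'k::comm_ring_1 poly" where
  "f_d p = - monom 1 (p^2 - 1) - monom 1 ((p^2 - 1) div 2)"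

(* C is (a representative-level version of) the Cartier operator on differentials g dx,
   g in R: well defined on R, C(a^p alpha + beta) = a C(alpha) + C(beta),
   C(x^(p-1) dx) = dx, C(x^n dx) = 0 for n not congruent to -1 mod p. *)
definition is_cartier :: "nat \<Rightarrow> 'k::comm_ring_1 poly poly \<Rightarrow>
    ('k poly poly \<Rightarrow> 'k poly poly) \<Rightarrow> bool" where
  "is_cartier p F C \<longleftrightarrow>
     (\<forall>\<alpha> \<beta>. F dvd (\<alpha> - \<beta>) \<longrightarrow> F dvd (C \<alpha> - C \<beta>)) \<and>
     (\<forall>a \<alpha> \<beta>. F dvd (C (a ^ p * \<alpha> + \<beta>) - (a * C \<alpha> + C \<beta>))) \<and>
     F dvd (C (xR ^ (p - 1)) - 1) \<and>
     (\<forall>n. n mod p \<noteq> p - 1 \<longrightarrow> F dvd C (xR ^ n))"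

(* y^i x^j dx belongs to the basis B_X of H^0(X, Omega^1) for the curve of degree D *)
definition in_basis :: "nat \<Rightarrow> nat \<Rightarrow> nat \<Rightarrow> nat \<Rightarrow> bool" where
  "in_basis p D i j \<longleftrightarrow> i \<le> p - 2 \<and>
      int j \<le> \<lceil>real ((p - i - 1) * D) / real p\<rceil> - 2"

definition lex_gt :: "nat \<times> nat \<Rightarrow> nat \<times> nat \<Rightarrow> bool" where
  "lex_gt ij ab \<longleftrightarrow> fst ij > fst ab \<or> (fst ij = fst ab \<and> snd ij > snd ab)"

(* the largest term of the differential w dx (written in the monomial basis y^i x^j,
   i < deg_y F, of R) is y^i0 x^j0 dx *)
definition largest_term_is :: "'k::comm_ring_1 poly poly \<Rightarrow> 'k poly poly \<Rightarrow> nat \<Rightarrow> nat \<Rightarrow> bool" where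
  "largest_term_is F w i0 j0 \<longleftrightarrow>
     (\<exists>r. F dvd (w - r) \<and> degree r < degree F \<and>
          coeff (coeff r i0) j0 \<noteq> 0 \<and>
          (\<forall>i j. lex_gt (i, j) (i0, j0) \<longrightarrow> coeff (coeff r i) j = 0))"

end

theory Submission
  imports Defs "HOL-Computational_Algebra.Primes"
begin


lemma dvd_pow_diff:
  fixes F a b :: "'a::comm_ring_1"
  assumes "F dvd a - b" shows "F dvd a ^ m - b ^ m"
proof (induction m)
  case 0 then show ?case by simp
next
  case (Suc m)
  have "a ^ Suc m - b ^ Suc m = a * (a^m - b^m) + (a - b) * b^m"
    by (simp add: algebra_simps)
  then show ?case using Suc assms by (simp add: dvd_add dvd_mult dvd_mult2)
qed

lemma dvd_sum_diff:
  fixes F :: "'a::comm_ring_1"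
  shows "(\<And>i. i \<in> A \<Longrightarrow> F dvd u i - v i) \<Longrightarrow> F dvd sum u A - sum v A"
  by (simp add: sum_subtractf[symmetric] dvd_sum)

lemma dvd_trans_diff:
  fixes F :: "'a::comm_ring_1"
  shows "F dvd a - b \<Longrightarrow> F dvd b - c \<Longrightarrow> F dvd a - c"
  by (metis diff_add_cancel add_diff_eq dvd_add)

lemma cart_0: "is_cartier p F C \<Longrightarrow> F dvd C 0"
proof -
  assume h: "is_cartier p F C"
  then have "F dvd C (1 ^ p * 0 + 0) - (1 * C 0 + C 0)" unfolding is_cartier_def by blast
  then show ?thesis by (simp add: dvd_minus_iff)
qed

lemma cart_add: "is_cartier p F C \<Longrightarrow> F dvd C (a + b) - (C a + C b)"
proof -
  assume h: "is_cartier p F C"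
  then have "F dvd C (1 ^ p * a + b) - (1 * C a + C b)" unfolding is_cartier_def by blast
  then show ?thesis by simp
qed

lemma cart_scal: "is_cartier p F C \<Longrightarrow> F dvd C (a ^ p * b) - a * C b"
proof -
  assume h: "is_cartier p F C"
  then have "F dvd C (a ^ p * b + 0) - (a * C b + C 0)" unfolding is_cartier_def by blast
  moreover have "F dvd C 0" using cart_0 h by blast
  ultimately have "F dvd (C (a ^ p * b) - (a * C b + C 0)) + C 0" by (intro dvd_add) simp_all
  moreover have "(C (a ^ p * b) - (a * C b + C 0)) + C 0 = C (a ^ p * b) - a * C b" by (simp add: algebra_simps)
  ultimately show ?thesis by simp
qed

lemma cart_resp: "is_cartier p F C \<Longrightarrow> F dvd a - b \<Longrightarrow> F dvd C a - C b"
  unfolding is_cartier_def by blast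

lemma cart_sum: assumes "is_cartier p F C" "finite A" shows "F dvd C (sum g A) - sum (\<lambda>i. C (g i)) A"
  using assms(2)
proof (induction A rule: finite_induct)
  case empty then show ?case using cart_0 assms by simp
next
  case (insert x A)
  have "F dvd C (g x + sum g A) - (C (g x) + C (sum g A))" using cart_add assms by blast
  moreover have "F dvd (C (g x) + C (sum g A)) - (C (g x) + sum (\<lambda>i. C (g i)) A)"
    using insert by simp
  ultimately have "F dvd C (g x + sum g A) - (C (g x) + sum (\<lambda>i. C (g i)) A)"
    by (rule dvd_trans_diff)
  then show ?case using insert by simp
qed

lemma cart_nat: "is_cartier p F C \<Longrightarrow> F dvd C (of_nat c * a) - of_nat c * C a"
proof (induction c)
  case 0 then show ?case using cart_0 by simp
next
  case (Suc c)
  have "F dvd C (a + of_nat c * a) - (C a + C (of_nat c * a))" using cart_add Suc by blast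
  moreover have "F dvd (C a + C (of_nat c * a)) - (C a + of_nat c * C a)"
    using Suc by simp
  ultimately have "F dvd C (a + of_nat c * a) - (C a + of_nat c * C a)"
    by (rule dvd_trans_diff)
  then show ?case by (simp add: algebra_simps)
qed

lemma cart_x: fixes C :: "'k::comm_ring_1 poly poly \<Rightarrow> 'k poly poly" assumes "is_cartier p F C" "p > 0"
  shows "F dvd C (xR ^ N) - (if N mod p = p - 1 then xR ^ (N div p) else 0)"
proof (cases "N mod p = p - 1")
  case True
  have e: "(xR :: 'k poly poly) ^ N = (xR ^ (N div p)) ^ p * xR ^ (p - 1)"
  proof -
    have "N = N div p * p + (p - 1)" using True by (metis div_mult_mod_eq)
    then have "xR ^ N = (xR :: 'k poly poly) ^ (N div p * p) * xR ^ (p - 1)" by (metis power_add)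
    then show ?thesis by (simp add: power_mult)
  qed
  have "F dvd C ((xR ^ (N div p)) ^ p * xR ^ (p - 1)) - xR ^ (N div p) * C (xR ^ (p-1))"
    using cart_scal assms by blast
  moreover have "F dvd xR ^ (N div p) * C (xR ^ (p-1)) - xR ^ (N div p)"
  proof -
    have "F dvd C (xR ^ (p - 1)) - 1" using assms(1) unfolding is_cartier_def by blast
    then have "F dvd xR ^ (N div p) * (C (xR ^ (p - 1)) - 1)" by (rule dvd_mult)
    then show ?thesis by (simp add: algebra_simps)
  qed
  ultimately have "F dvd C ((xR ^ (N div p)) ^ p * xR ^ (p - 1)) - xR ^ (N div p)"
    by (rule dvd_trans_diff)
  then show ?thesis using True e by simp
next
  case False
  then show ?thesis using assms unfolding is_cartier_def by simp
qed



lemma yR_pow: "(yR :: 'k::comm_ring_1 poly poly) ^ i = monom 1 i"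
  by (simp add: yR_def monom_altdef)

lemma xR_pow: "(xR :: 'k::comm_ring_1 poly poly) ^ e = monom (monom 1 e) 0"
  by (simp add: xR_def monom_altdef poly_const_pow monom_0)

lemma AS_eq:
  assumes "p^2 - 1 = 2*h" "p > 1"
  shows "AS_poly (f_d p) p = (yR :: 'k::comm_ring_1 poly poly) ^ p - yR + (xR ^ (2*h) + xR ^ h)"
proof -
  have h: "(p^2-1) div 2 = h" using assms(1) by simp
  have a: "([:f_d p:] :: 'k poly poly) = - (xR ^ (2*h)) - xR ^ h"
    unfolding f_d_def h assms(1) by (simp add: xR_pow monom_0)
  have e1: "yR = (monom 1 1 :: 'k poly poly)" using yR_pow[of 1] by simp
  have b: "AS_poly (f_d p) p = (yR :: 'k poly poly)^p - yR - [:f_d p:]"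
    unfolding AS_poly_def yR_pow[of p, symmetric] e1[symmetric] ..
  show ?thesis unfolding b a by (simp add: algebra_simps)
qed



definition TT :: "nat \<Rightarrow> nat \<Rightarrow> 'k::comm_ring_1 poly poly" where
  "TT p N = (if N mod p = p - 1 then xR ^ (N div p) else 0)"

lemma term_eq:
  "(yR :: 'k::comm_ring_1 poly poly) ^ i * (of_nat a * (of_nat b * TT p N)) =
   monom (if N mod p = p - 1 then monom (of_nat (a * b)) (N div p) else 0) i"
proof (cases "N mod p = p - 1")
  case True
  have "(of_nat a * (of_nat b * monom 1 (N div p)) :: 'k poly) = monom (of_nat (a*b)) (N div p)"
    by (simp add: of_nat_monom mult_monom)
  then show ?thesis using True
    by (simp add: TT_def yR_pow xR_pow of_nat_monom mult_monom)
next
  case False then show ?thesis by (simp add: TT_def)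
qed

lemma g_pow:
  "((xR :: 'k::comm_ring_1 poly poly) ^ (2*h) + xR ^ h) ^ j * xR ^ n =
   (\<Sum>t\<le>j. of_nat (j choose t) * xR ^ (h*(j+t)+n))"
proof -
  have "((xR :: 'k poly poly) ^ (2*h) + xR ^ h) ^ j * xR ^ n =
     (\<Sum>t\<le>j. of_nat (j choose t) * (xR ^ (2*h)) ^ t * (xR ^ h) ^ (j - t) * xR ^ n)"
    by (simp add: binomial_ring sum_distrib_right)
  also have "\<dots> = (\<Sum>t\<le>j. of_nat (j choose t) * xR ^ (h*(j+t)+n))"
  proof (rule sum.cong)
    fix t assume "t \<in> {..j}"
    then obtain u where "j = t + u" by (metis atMost_iff le_add_diff_inverse)
    then have "2*h*t + h*(j-t) + n = h*(j+t)+n" by (simp add: algebra_simps)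
    then show "of_nat (j choose t) * (xR ^ (2*h)) ^ t * (xR ^ h) ^ (j - t) * xR ^ n =
        of_nat (j choose t) * (xR :: 'k poly poly) ^ (h*(j+t)+n)"
    proof -
      have "(xR ^ (2*h)) ^ t * (xR ^ h) ^ (j - t) * xR ^ n = (xR :: 'k poly poly) ^ (2*h*t + h*(j-t) + n)"
        by (simp only: power_add power_mult)
      then show ?thesis using \<open>2*h*t + h*(j-t) + n = h*(j+t)+n\<close> by (simp add: mult.assoc)
    qed
  qed simp
  finally show ?thesis .
qed

lemma comp:
  fixes C :: "'k::comm_ring_1 poly poly \<Rightarrow> 'k poly poly"
  assumes cart: "is_cartier p F C" and p: "p > 0"
    and Fd: "F = yR ^ p - yR + (xR ^ (2*h) + xR ^ h)"
  shows "F dvd C (yR ^ m * xR ^ n) -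
    (\<Sum>i\<le>m. \<Sum>t\<le>m-i. monom (if (h*(m-i+t)+n) mod p = p - 1
        then monom (of_nat ((m choose i) * ((m-i) choose t))) ((h*(m-i+t)+n) div p) else 0) i)"
proof -
  define g :: "'k poly poly" where "g = xR ^ (2*h) + xR ^ h"
  define Y :: "'k poly poly" where "Y = yR"
  have "Y - (Y ^ p + g) = - F" by (simp add: Fd g_def Y_def)
  then have "F dvd Y - (Y ^ p + g)" by simp
  then have "F dvd Y ^ m - (Y ^ p + g) ^ m" by (rule dvd_pow_diff)
  then have "F dvd (Y ^ m - (Y ^ p + g) ^ m) * xR ^ n" by (rule dvd_mult2)
  then have s1: "F dvd Y ^ m * xR ^ n - (Y ^ p + g) ^ m * xR ^ n" by (simp add: algebra_simps)
  have s2: "(Y ^ p + g) ^ m * xR ^ n = (\<Sum>i\<le>m. (Y ^ i) ^ p * (of_nat (m choose i) * (g ^ (m-i) * xR ^ n)))"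
  proof -
    have "(Y ^ p + g) ^ m * xR ^ n = (\<Sum>i\<le>m. of_nat (m choose i) * (Y ^ p) ^ i * g ^ (m - i) * xR ^ n)"
      by (simp add: binomial_ring sum_distrib_right)
    also have "\<dots> = (\<Sum>i\<le>m. (Y ^ i) ^ p * (of_nat (m choose i) * (g ^ (m-i) * xR ^ n)))"
    proof (rule sum.cong)
      fix i
      have "(Y ^ p) ^ i = (Y ^ i) ^ p" by (simp add: power_mult[symmetric] mult.commute)
      then show "of_nat (m choose i) * (Y ^ p) ^ i * g ^ (m - i) * xR ^ n = (Y ^ i) ^ p * (of_nat (m choose i) * (g ^ (m-i) * xR ^ n))"
        by (simp add: algebra_simps)
    qed simp
    finally show ?thesis .
  qed
  define A where "A = (\<lambda>i. (Y ^ i) ^ p * (of_nat (m choose i) * (g ^ (m-i) * xR ^ n)))"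
  have s3: "F dvd C (Y ^ m * xR ^ n) - C (sum A {..m})"
    using cart_resp[OF cart s1] s2 A_def by simp
  have s4: "F dvd C (sum A {..m}) - (\<Sum>i\<le>m. C (A i))" using cart_sum[OF cart] by blast
  define Tm where "Tm = (\<lambda>j. (\<Sum>t\<le>j. of_nat (j choose t) * (TT p (h*(j+t)+n) :: 'k poly poly)))"
  have s6: "F dvd C (g ^ j * xR ^ n) - Tm j" for j
  proof -
    have e: "g ^ j * xR ^ n = (\<Sum>t\<le>j. of_nat (j choose t) * xR ^ (h*(j+t)+n))"
      unfolding g_def by (rule g_pow)
    have "F dvd C (g ^ j * xR ^ n) - (\<Sum>t\<le>j. C (of_nat (j choose t) * xR ^ (h*(j+t)+n)))"
      unfolding e using cart_sum[OF cart] by blast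
    moreover have "F dvd (\<Sum>t\<le>j. C (of_nat (j choose t) * xR ^ (h*(j+t)+n))) - Tm j"
      unfolding Tm_def
    proof (rule dvd_sum_diff)
      fix t
      have "F dvd C (of_nat (j choose t) * xR ^ (h*(j+t)+n)) - of_nat (j choose t) * C (xR ^ (h*(j+t)+n))"
        by (rule cart_nat[OF cart])
      moreover have "F dvd C (xR ^ (h*(j+t)+n)) - TT p (h*(j+t)+n)"
        using cart_x[OF cart p] unfolding TT_def by blast
      then have "F dvd of_nat (j choose t) * (C (xR ^ (h*(j+t)+n)) - TT p (h*(j+t)+n))"
        by (rule dvd_mult)
      then have "F dvd of_nat (j choose t) * C (xR ^ (h*(j+t)+n)) - of_nat (j choose t) * TT p (h*(j+t)+n)"
        by (simp add: algebra_simps)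
      ultimately show "F dvd C (of_nat (j choose t) * xR ^ (h*(j+t)+n)) - of_nat (j choose t) * TT p (h*(j+t)+n)"
        by (rule dvd_trans_diff)
    qed
    ultimately show ?thesis by (rule dvd_trans_diff)
  qed
  have s5: "F dvd (\<Sum>i\<le>m. C (A i)) - (\<Sum>i\<le>m. Y ^ i * (of_nat (m choose i) * Tm (m-i)))"
  proof (rule dvd_sum_diff)
    fix i
    have "F dvd C (A i) - Y ^ i * C (of_nat (m choose i) * (g ^ (m-i) * xR ^ n))"
      unfolding A_def by (rule cart_scal[OF cart])
    moreover have "F dvd C (of_nat (m choose i) * (g ^ (m-i) * xR ^ n)) - of_nat (m choose i) * C (g ^ (m-i) * xR ^ n)"
      by (rule cart_nat[OF cart])
    moreover have "F dvd of_nat (m choose i) * (C (g ^ (m-i) * xR ^ n) - Tm (m-i))"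
      using s6 by (rule dvd_mult)
    ultimately have "F dvd C (of_nat (m choose i) * (g ^ (m-i) * xR ^ n)) - of_nat (m choose i) * Tm (m-i)"
      by (metis dvd_trans_diff right_diff_distrib')
    then have "F dvd Y ^ i * (C (of_nat (m choose i) * (g ^ (m-i) * xR ^ n)) - of_nat (m choose i) * Tm (m-i))"
      by (rule dvd_mult)
    then have "F dvd Y ^ i * C (of_nat (m choose i) * (g ^ (m-i) * xR ^ n)) - Y ^ i * (of_nat (m choose i) * Tm (m-i))"
      by (simp add: algebra_simps)
    with \<open>F dvd C (A i) - Y ^ i * C (of_nat (m choose i) * (g ^ (m-i) * xR ^ n))\<close>
    show "F dvd C (A i) - Y ^ i * (of_nat (m choose i) * Tm (m-i))" by (rule dvd_trans_diff)
  qed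
  have s8: "(\<Sum>i\<le>m. Y ^ i * (of_nat (m choose i) * Tm (m-i))) =
    (\<Sum>i\<le>m. \<Sum>t\<le>m-i. monom (if (h*(m-i+t)+n) mod p = p - 1
        then monom (of_nat ((m choose i) * ((m-i) choose t))) ((h*(m-i+t)+n) div p) else 0) i)"
    unfolding Tm_def Y_def sum_distrib_left term_eq ..
  have "F dvd C (Y ^ m * xR ^ n) - (\<Sum>i\<le>m. Y ^ i * (of_nat (m choose i) * Tm (m-i)))"
    using s3 s4 s5 dvd_trans_diff by blast
  then have "F dvd C (Y ^ m * xR ^ n) - (\<Sum>i\<le>m. \<Sum>t\<le>m-i. monom (if (h*(m-i+t)+n) mod p = p - 1
        then monom (of_nat ((m choose i) * ((m-i) choose t))) ((h*(m-i+t)+n) div p) else 0) i)"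
    unfolding s8 .
  then show ?thesis unfolding Y_def .
qed



lemma uniq:
  fixes p h s s' n :: nat
  assumes "p^2 - 1 = 2*h" "p > 1" "s' < p" "s < p" "(h*s'+n) mod p = (h*s+n) mod p"
  shows "s' = s"
proof -
  have "int (h*s'+n) mod int p = int (h*s+n) mod int p" using assms(5)
    by (metis of_nat_mod)
  then have "int p dvd int (h*s'+n) - int (h*s+n)" by (simp only: mod_eq_dvd_iff)
  then have "int p dvd int h * (int s' - int s)" by (simp add: algebra_simps)
  then have "int p dvd 2 * int h * (int s' - int s)" by (metis dvd_mult mult.assoc)
  moreover have eq: "2 * int h = int p * int p - 1" using assms(1,2)
    by (metis (no_types, lifting) One_nat_def Suc_leI less_imp_le_nat of_nat_1 of_nat_diff
        of_nat_mult one_le_power power2_eq_square zero_less_Suc order.strict_trans of_nat_numeral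
        mult_2)
  moreover have "2 * int h * (int s' - int s) = int p * (int p * (int s' - int s)) - (int s' - int s)"
    unfolding eq by (simp add: algebra_simps)
  ultimately have X: "int p dvd int p * (int p * (int s' - int s)) - (int s' - int s)"
    by metis
  have "int p dvd int p * (int p * (int s' - int s)) - (int p * (int p * (int s' - int s)) - (int s' - int s))"
    by (rule dvd_diff[OF dvd_triv_left X])
  then have D1: "int p dvd (int s' - int s)" by simp
  have D2: "\<bar>int s' - int s\<bar> < int p" using assms(3,4) by linarith
  have "int s' - int s = 0"
  proof (rule ccontr)
    assume a: "int s' - int s \<noteq> 0"
    then have "\<bar>int p\<bar> \<le> \<bar>int s' - int s\<bar>" using dvd_imp_le_int D1 by blast
    then show False using D2 by simp
  qed
  then show ?thesis by simp
qed

lemma NT: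
  fixes p k0 l h :: nat
  assumes pr: "prime p" and od: "odd p" and hh: "p^2 - 1 = 2*h" and k0: "2*k0+3 \<le> p"
    and lb: "p*l + p \<le> h*(p - 2 - 2*k0)" and hp: "p \<le> h"
  shows "\<exists>m n t0. k0 \<le> m \<and> 2*m + 3 \<le> p \<and> n + 1 \<le> h \<and> t0 \<le> m - k0 \<and>
    (h*(m-k0+t0)+n) mod p = p-1 \<and> (h*(m-k0+t0)+n) div p = l \<and>
    (\<forall>t \<le> m-k0. (h*(m-k0+t)+n) mod p = p-1 \<longrightarrow> t = t0) \<and>
    (\<forall>i t. k0 < i \<and> i \<le> m \<and> t \<le> m - i \<longrightarrow> (h*(m-i+t)+n) mod p \<noteq> p-1)"
proof -
  have p1: "p > 1" using pr prime_gt_1_nat by blast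
  define S where "S = p - 3 - 2*k0"
  define P where "P = p*(l+1) - 1"
  have hpos: "h > 0" using hp p1 by linarith
  define s where "s = min S (P div h)"
  define J where "J = (s+1) div 2"
  define m where "m = k0 + J"
  define n where "n = P - s*h"
  define t0 where "t0 = s - J"
  have sh: "s*h \<le> P"
  proof -
    have "s*h \<le> P div h * h" unfolding s_def by simp
    also have "\<dots> \<le> P" by (simp add: div_times_less_eq_dividend)
    finally show ?thesis .
  qed
  have S1: "S + 1 = p - 2 - 2*k0" unfolding S_def using k0 by simp
  have nh: "n + 1 \<le> h"
  proof (cases "s = P div h")
    case True
    then have "n = P mod h" unfolding n_def by (simp add: minus_div_mult_eq_mod)
    then show ?thesis using hpos by (metis Suc_eq_plus1 Suc_leI mod_less_divisor)
  next
    case False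
    then have sS: "s = S" unfolding s_def by (simp add: min_def split: if_splits)
    have "P + 1 = p*l + p" unfolding P_def using p1 by (simp add: algebra_simps)
    also have "\<dots> \<le> h * (S+1)" using lb S1 by simp
    finally have "P + 1 \<le> S*h + h" by (simp add: algebra_simps)
    moreover have "S*h \<le> P" using sh sS by simp
    ultimately show ?thesis unfolding n_def sS by linarith
  qed
  have hs: "h*s + n = P" unfolding n_def using sh by (simp add: mult.commute)
  have Pl: "P = p*l + (p-1)" unfolding P_def using p1 by (simp add: algebra_simps)
  have Pmod: "P mod p = p - 1"
  proof -
    have "P mod p = ((p-1) + l*p) mod p" using Pl by (simp add: mult.commute)
    also have "\<dots> = (p-1) mod p" by (rule mod_mult_self1)
    also have "\<dots> = p-1" using p1 by simp
    finally show ?thesis .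
  qed
  have Pdiv: "P div p = l"
  proof -
    have "P div p = ((p-1) + l*p) div p" using Pl by (simp add: algebra_simps)
    also have "\<dots> = (p-1) div p + l" using p1 by (simp only: div_mult_self1)
    also have "\<dots> = l" using p1 by simp
    finally show ?thesis .
  qed
  have sS: "s \<le> S" unfolding s_def by simp
  have J1: "2*J \<le> s+1" "s \<le> 2*J" "J \<le> s" unfolding J_def by auto
  have sp: "s + 1 < p" using sS S1 k0 by linarith
  have cond: "(h*s'+n) mod p = p-1 \<longleftrightarrow> s' = s" if "s' < p" for s'
  proof
    assume "(h*s'+n) mod p = p-1"
    then have "(h*s'+n) mod p = (h*s+n) mod p" using hs Pmod by simp
    then show "s' = s" using uniq[OF hh p1 that] sp by simp
  next
    assume "s' = s" then show "(h*s'+n) mod p = p-1" using hs Pmod by simp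
  qed
  have "k0 \<le> m" unfolding m_def by simp
  moreover have "2*m + 3 \<le> p"
  proof -
    have "2*J \<le> p - 2 - 2*k0" using J1 sS S1 by linarith
    moreover have "2*J \<noteq> p - 2 - 2*k0"
    proof
      assume "2*J = p - 2 - 2*k0"
      then have "p = 2*J + 2 + 2*k0" using k0 by linarith
      then have "p = 2*(J+1+k0)" by simp
      then show False using od by simp
    qed
    ultimately have "2*J \<le> p - 3 - 2*k0" by linarith
    then show ?thesis unfolding m_def using k0 by (simp add: algebra_simps)
  qed
  moreover have "t0 \<le> m - k0" unfolding t0_def m_def using J1 by simp
  moreover have e0: "m - k0 + t0 = s" unfolding t0_def m_def using J1 by simp
  moreover have "(h*(m-k0+t0)+n) mod p = p-1" using e0 hs Pmod by simp
  moreover have "(h*(m-k0+t0)+n) div p = l" using e0 hs Pdiv by simp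
  moreover have "\<forall>t \<le> m-k0. (h*(m-k0+t)+n) mod p = p-1 \<longrightarrow> t = t0"
  proof (intro allI impI)
    fix t assume t: "t \<le> m - k0" "(h*(m-k0+t)+n) mod p = p-1"
    have "m - k0 + t < p" using t(1) J1 sp unfolding m_def by linarith
    then have "m - k0 + t = s" using cond t(2) by blast
    then show "t = t0" unfolding t0_def m_def by simp
  qed
  moreover have "\<forall>i t. k0 < i \<and> i \<le> m \<and> t \<le> m - i \<longrightarrow> (h*(m-i+t)+n) mod p \<noteq> p-1"
  proof (intro allI impI)
    fix i t assume a: "k0 < i \<and> i \<le> m \<and> t \<le> m - i"
    then have "m - i + t + 1 \<le> s" using J1 unfolding m_def by linarith
    moreover have "m - i + t < p" using a J1 sp unfolding m_def by linarith
    ultimately show "(h*(m-i+t)+n) mod p \<noteq> p-1" using cond by fastforce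
  qed
  ultimately show ?thesis using nh by blast
qed



lemma coeffR:
  "coeff (coeff (\<Sum>i\<le>m. \<Sum>t\<le>m-i. monom (if c i t then monom (v i t) (e i t) else 0) i) a) b =
   (\<Sum>i\<le>m. \<Sum>t\<le>m-i. if i = a \<and> c i t \<and> e i t = b then v i t else (0::'a::comm_ring_1))"
  by (auto simp: coeff_sum coeff_monom intro!: sum.cong)

lemma degR:
  "degree (\<Sum>i\<le>m. \<Sum>t\<le>m-i. monom (x i t :: 'a::comm_ring_1 poly) i) \<le> m"
  by (intro degree_sum_le) (auto intro: order.trans[OF degree_monom_le])

lemma choose_ndvd: "prime p \<Longrightarrow> a < p \<Longrightarrow> b \<le> a \<Longrightarrow> \<not> p dvd (a choose b)"
proof
  assume a: "prime p" "a < p" "b \<le> a" "p dvd (a choose b)"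
  then have "p dvd fact b * fact (a-b) * (a choose b)" by simp
  then have "p dvd fact a" using binomial_fact_lemma[OF a(3)] by simp
  then show False using prime_dvd_fact_iff[OF a(1)] a(2) by simp
qed

lemma degF: "p > 1 \<Longrightarrow> p \<le> degree (AS_poly f p)"
  by (rule le_degree) (simp add: AS_poly_def coeff_monom coeff_pCons split: nat.split)



theorem mainTheorem8:
  fixes p :: nat and k0 l :: nat
    and C :: "'k::alg_closed_field poly poly \<Rightarrow> 'k poly poly"
  assumes "prime p" and "odd p" and "CHAR('k) = p"
    and "is_cartier p (AS_poly (f_d p :: 'k poly) p) C"
    and "real k0 < (real p - 1) / 2"
    and "real l \<le> (real (p^2 - 1) * (real p / 2 - 1 - real k0) - real p) / real p"
  shows "\<exists>m n. in_basis p (p^2 - 1) m n \<and> real m < (real p - 1) / 2 \<and>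
           largest_term_is (AS_poly (f_d p) p) (C (yR ^ m * xR ^ n)) k0 l"
proof -
  note pr = assms(1) and od = assms(2)
  have p1: "p > 1" using pr prime_gt_1_nat by blast
  have p3: "p \<ge> 3"
  proof -
    have "p \<noteq> 2" using od by auto
    then show ?thesis using p1 by linarith
  qed
  define h where "h = (p^2 - 1) div 2"
  have hh: "p^2 - 1 = 2*h"
  proof -
    have "odd (p^2)" using od by simp
    then have "even (p^2 - 1)" using p1 by (simp add: Parity.odd_pos)
    then show ?thesis unfolding h_def by simp
  qed
  have hp: "p \<le> h"
  proof -
    have "3*p \<le> p*p" using p3 by simp
    then have "2*p + 1 \<le> p^2 - 1" unfolding power2_eq_square using p3 by linarith
    then show ?thesis using hh by linarith
  qed
  have k0: "2*k0+3 \<le> p"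
  proof -
    have "2*real k0 + 1 < real p" using assms(5) by (simp add: field_simps)
    then have "2*k0+1 < p" by linarith
    moreover have "2*k0+2 \<noteq> p"
    proof
      assume "2*k0+2 = p" then have "p = 2*(k0+1)" by simp
      then show False using od by simp
    qed
    ultimately show ?thesis by linarith
  qed
  have lb: "p*l + p \<le> h*(p - 2 - 2*k0)"
  proof -
    have rh: "real (p^2 - 1) = 2 * real h" using hh by (metis of_nat_mult of_nat_numeral)
    have rp: "real (p - 2 - 2*k0) = real p - 2 - 2 * real k0" using k0 by (simp add: of_nat_diff)
    have "real p * real l \<le> real (p^2 - 1) * (real p / 2 - 1 - real k0) - real p"
      using assms(6) p1 by (simp add: pos_le_divide_eq mult.commute)
    also have "\<dots> = real h * real (p - 2 - 2*k0) - real p" unfolding rh rp by (simp add: algebra_simps)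
    finally have "real (p*l + p) \<le> real (h*(p - 2 - 2*k0))" by simp
    then show ?thesis by linarith
  qed
  obtain m n t0 where mn: "k0 \<le> m" "2*m + 3 \<le> p" "n + 1 \<le> h" "t0 \<le> m - k0"
    "(h*(m-k0+t0)+n) mod p = p-1" "(h*(m-k0+t0)+n) div p = l"
    "\<forall>t \<le> m-k0. (h*(m-k0+t)+n) mod p = p-1 \<longrightarrow> t = t0"
    "\<forall>i t. k0 < i \<and> i \<le> m \<and> t \<le> m - i \<longrightarrow> (h*(m-i+t)+n) mod p \<noteq> p-1"
    using NT[OF pr od hh k0 lb hp] by blast
  define F :: "'k poly poly" where "F = AS_poly (f_d p) p"
  have Fd: "F = yR ^ p - yR + (xR ^ (2*h) + xR ^ h)" unfolding F_def by (rule AS_eq[OF hh p1])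
  define R :: "'k poly poly" where "R = (\<Sum>i\<le>m. \<Sum>t\<le>m-i. monom (if (h*(m-i+t)+n) mod p = p - 1
        then monom (of_nat ((m choose i) * ((m-i) choose t))) ((h*(m-i+t)+n) div p) else 0) i)"
  have dv: "F dvd C (yR ^ m * xR ^ n) - R"
    unfolding R_def using comp[OF assms(4)[folded F_def] _ Fd] p1 by simp
  have degRm: "degree R \<le> m" unfolding R_def by (rule degR)
  have degFp: "p \<le> degree F" unfolding F_def using degF p1 by blast
  have degRF: "degree R < degree F" using degRm degFp mn(2) by linarith
  define cf where "cf = (\<lambda>i t. (h*(m-i+t)+n) mod p = p - 1)"
  define vv where "vv = (\<lambda>i t. (of_nat ((m choose i) * ((m-i) choose t)) :: 'k))"
  define ee where "ee = (\<lambda>i t. (h*(m-i+t)+n) div p)"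
  have cR: "coeff (coeff R a) b =
     (\<Sum>i\<le>m. \<Sum>t\<le>m-i. if i = a \<and> cf i t \<and> ee i t = b then vv i t else 0)" for a b
    unfolding R_def cf_def vv_def ee_def by (rule coeffR)
  have z1: "coeff (coeff R a) b = 0" if "a > k0" for a b
    unfolding cR using mn(8) that by (intro sum.neutral ballI) (auto simp: cf_def)
  have z2: "coeff (coeff R k0) b = 0" if "b > l" for b
    unfolding cR using mn(6,7) that by (intro sum.neutral ballI) (auto simp: cf_def ee_def)
  have nz: "coeff (coeff R k0) l \<noteq> 0"
  proof -
    let ?f = "\<lambda>i t. if i = k0 \<and> cf i t \<and> ee i t = l then vv i t else 0"
    have "(\<Sum>i\<le>m. \<Sum>t\<le>m-i. ?f i t) = (\<Sum>t\<le>m-k0. ?f k0 t) + (\<Sum>i\<in>{..m}-{k0}. \<Sum>t\<le>m-i. ?f i t)"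
      using mn(1) by (subst sum.remove[of _ k0]) auto
    also have "(\<Sum>i\<in>{..m}-{k0}. \<Sum>t\<le>m-i. ?f i t) = 0" by (intro sum.neutral ballI) auto
    also have "(\<Sum>t\<le>m-k0. ?f k0 t) = ?f k0 t0 + (\<Sum>t\<in>{..m-k0}-{t0}. ?f k0 t)"
      using mn(4) by (subst sum.remove[of _ t0]) auto
    also have "(\<Sum>t\<in>{..m-k0}-{t0}. ?f k0 t) = 0" using mn(7)
      by (intro sum.neutral ballI) (auto simp: cf_def)
    also have "?f k0 t0 = vv k0 t0" using mn(5,6) by (simp add: cf_def ee_def)
    finally have "coeff (coeff R k0) l = vv k0 t0" unfolding cR by simp
    moreover have "vv k0 t0 \<noteq> 0"
    proof -
      have "\<not> p dvd (m choose k0)" using choose_ndvd[OF pr _ mn(1)] mn(2) by simp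
      moreover have "\<not> p dvd ((m-k0) choose t0)" using choose_ndvd[OF pr _ mn(4)] mn(2) by simp
      ultimately have "\<not> p dvd ((m choose k0) * ((m-k0) choose t0))"
        using pr by (simp add: prime_dvd_mult_iff)
      then show ?thesis unfolding vv_def of_nat_eq_0_iff_char_dvd assms(3) .
    qed
    ultimately show ?thesis by simp
  qed
  have lt: "largest_term_is F (C (yR ^ m * xR ^ n)) k0 l"
    unfolding largest_term_is_def lex_gt_def
    using dv degRF nz z1 z2 by (intro exI[of _ R]) auto
  have ib: "in_basis p (p^2 - 1) m n"
  proof -
    have A: "p*(n+2) \<le> (p-m-1)*(p^2-1)"
    proof -
      have "p*(n+2) \<le> p*(h+1)" using mn(3) by (intro mult_le_mono2) simp
      also have "\<dots> \<le> (p+1)*h" using hp by simp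
      also have "\<dots> \<le> (2*(p-m-1))*h" using mn(2) by (intro mult_le_mono1) linarith
      also have "\<dots> = (p-m-1)*(p^2-1)" using hh by simp
      finally show ?thesis .
    qed
    then have B: "real (n+2) * real p \<le> real ((p-m-1)*(p^2-1))"
      by (metis of_nat_le_iff of_nat_mult mult.commute)
    have pp: "real p > 0" using p1 by simp
    have "real (n+2) \<le> real ((p-m-1)*(p^2-1)) / real p"
      unfolding pos_le_divide_eq[OF pp] by (rule B)
    then have "\<lceil>real (n+2)\<rceil> \<le> \<lceil>real ((p-m-1)*(p^2-1)) / real p\<rceil>" by (rule ceiling_mono)
    moreover have "\<lceil>real (n+2)\<rceil> = int (n+2)" by (rule ceiling_of_nat)
    ultimately have "int n \<le> \<lceil>real ((p-m-1)*(p^2-1)) / real p\<rceil> - 2" by linarith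
    moreover have "m \<le> p - 2" using mn(2) by linarith
    ultimately show ?thesis unfolding in_basis_def by (simp add: mult.commute)
  qed
  have "real (2*m+3) \<le> real p" using mn(2) by (simp only: of_nat_le_iff)
  then have "real m < (real p - 1) / 2" by (simp add: field_simps)
  then show ?thesis using ib lt unfolding F_def by blast
qed


end
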